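(* Let $\kappa$ be a kernel and $(A_n)$ a sequence of non-negative symmetric $n\times n$ matrices with $\delta_\square(A_n,\kappa)\to0$. Then there is a function $M(n)=o(n)$ such that only $o(n)$ entries of $A_n$ exceed $M(n)$, and the sum of these entries is $o(n^2)$.
   Context: A kernel is an integrable symmetric measurable $\kappa:[0,1]^2\to[0,\infty)$ (Lebesgue measure). For a matrix $A_n=(a_{ij})$, $\kappa_{A_n}$ equals $a_{ij}$ on $((i-1)/n,i/n]\times((j-1)/n,j/n]$. Cut norm $\|W\|_\square=\sup_{S,T}|\int_{S\times T}W|$; cut metric $\delta_\square(\kappa,\kappa')=\inf_\tau\|\kappa-\kappa'^\tau\|_\square$ over measure-preserving bijections $\tau$ of $[0,1]$, $\kappa'^\tau(x,y)=\kappa'(\tau(x),\tau(y))$; $\delta_\square(A_n,\kappa)=\delta_\square(\kappa_{A_n},\kappa)$. *)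

theory Defs
  imports "HOL-Analysis.Analysis" "HOL-Library.Landau_Symbols"
begin

definition unit_iv :: "real measure" where
  "unit_iv = restrict_space lborel {0..1}"

definition is_kernel :: "(real \<Rightarrow> real \<Rightarrow> real) \<Rightarrow> bool" where
  "is_kernel k \<longleftrightarrow>
     (\<lambda>(x,y). k x y) \<in> borel_measurable (unit_iv \<Otimes>\<^sub>M unit_iv) \<and>
     integrable (unit_iv \<Otimes>\<^sub>M unit_iv) (\<lambda>(x,y). k x y) \<and>
     (\<forall>x\<in>{0..1}. \<forall>y\<in>{0..1}. k x y = k y x \<and> 0 \<le> k x y)"

text \<open>Step kernel of an n x n matrix (0-indexed entries a i j, i,j < n):
  value a i j on (i/n,(i+1)/n] x (j/n,(j+1)/n].\<close>
definition step_kernel :: "nat \<Rightarrow> (nat \<Rightarrow> nat \<Rightarrow> real) \<Rightarrow> real \<Rightarrow> real \<Rightarrow> real" where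
  "step_kernel n a x y =
     (\<Sum>i<n. \<Sum>j<n. a i j * indicator {real i / real n <.. real (Suc i) / real n} x
                           * indicator {real j / real n <.. real (Suc j) / real n} y)"

definition cut_norm :: "(real \<times> real \<Rightarrow> real) \<Rightarrow> real" where
  "cut_norm W = Sup {\<bar>LINT z|(unit_iv \<Otimes>\<^sub>M unit_iv). indicator (S \<times> T) z * W z\<bar> | S T.
                       S \<in> sets unit_iv \<and> T \<in> sets unit_iv}"

definition mp_bij :: "(real \<Rightarrow> real) \<Rightarrow> bool" where
  "mp_bij t \<longleftrightarrow> bij_betw t {0..1} {0..1} \<and> t \<in> unit_iv \<rightarrow>\<^sub>M unit_iv \<and>
     (\<forall>B\<in>sets unit_iv. emeasure unit_iv (t -` B \<inter> space unit_iv) = emeasure unit_iv B)"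

definition cut_dist :: "(real \<Rightarrow> real \<Rightarrow> real) \<Rightarrow> (real \<Rightarrow> real \<Rightarrow> real) \<Rightarrow> real" where
  "cut_dist k k' = Inf {cut_norm (\<lambda>(x,y). k x y - k' (t x) (t y)) | t. mp_bij t}"

end

theory Submission
  imports Defs "HOL-Probability.Probability"
begin


lemma unit_iv_space[simp]: "space unit_iv = {0..1}"
  by (simp add: unit_iv_def)

lemma sets_unit_iv: "A \<in> sets unit_iv \<longleftrightarrow> A \<subseteq> {0..1} \<and> A \<in> sets borel"
  unfolding unit_iv_def by (subst sets_restrict_space_iff) auto

lemma emeasure_unit_iv: "A \<subseteq> {0..1} \<Longrightarrow> emeasure unit_iv A = emeasure lborel A"
  unfolding unit_iv_def by (rule emeasure_restrict_space) auto

lemma prob_unit_iv: "prob_space unit_iv"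
  by (rule prob_spaceI) (simp add: emeasure_unit_iv)

interpretation U: prob_space unit_iv by (rule prob_unit_iv)

lemma prob_P: "prob_space (unit_iv \<Otimes>\<^sub>M unit_iv)"
  by (simp add: U.prob_space_axioms prob_space_pair)

interpretation P: prob_space "unit_iv \<Otimes>\<^sub>M unit_iv" by (rule prob_P)
interpretation UU: pair_sigma_finite unit_iv unit_iv
  by (simp add: U.sigma_finite_measure_axioms pair_sigma_finite.intro)

definition cell :: "nat \<Rightarrow> nat \<Rightarrow> real set" where
  "cell n i = {real i / real n <.. real (Suc i) / real n}"

lemma cell_sub: assumes "i < n" shows "cell n i \<subseteq> {0..1}"
proof
  fix x assume "x \<in> cell n i"
  then have a: "real i / real n < x" "x \<le> real (Suc i) / real n" by (auto simp: cell_def)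
  have "0 \<le> real i / real n" by simp
  moreover have "real (Suc i) / real n \<le> 1" using assms by (simp add: divide_le_eq_1)
  ultimately show "x \<in> {0..1}" using a by (auto intro: order.trans[of 0 "real i / real n"] simp del: of_nat_Suc)
qed

lemma cell_sets: "i < n \<Longrightarrow> cell n i \<in> sets unit_iv"
  using cell_sub by (auto simp: sets_unit_iv cell_def)

lemma cell_measure: "i < n \<Longrightarrow> measure unit_iv (cell n i) = 1 / real n"
proof -
  assume "i < n"
  then have "emeasure unit_iv (cell n i) = ennreal (real (Suc i) / real n - real i / real n)"
    using cell_sub[of i n] by (simp add: emeasure_unit_iv cell_def divide_right_mono)
  also have "\<dots> = ennreal (1 / real n)" by (simp add: diff_divide_distrib[symmetric])
  finally show ?thesis by (simp add: measure_def)
qed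

lemma cell_disj: assumes "i \<noteq> j" shows "cell n i \<inter> cell n j = {}"
proof (rule ccontr)
  assume "cell n i \<inter> cell n j \<noteq> {}"
  then obtain x where x: "x \<in> cell n i" "x \<in> cell n j" by blast
  then have n: "n > 0" by (cases "n = 0") (auto simp: cell_def)
  from x n have "real i < x * n" "x * n \<le> real i + 1" "real j < x * n" "x * n \<le> real j + 1"
    by (auto simp: cell_def field_simps)
  then have "real i < real j + 1" "real j < real i + 1" by linarith+
  then show False using assms by linarith
qed

lemma cell_disjoint_family: "disjoint_family_on (cell n) I"
  using cell_disj by (auto simp: disjoint_family_on_def)

lemma times_measure: "A \<in> sets unit_iv \<Longrightarrow> B \<in> sets unit_iv \<Longrightarrow>
   measure (unit_iv \<Otimes>\<^sub>M unit_iv) (A \<times> B) = measure unit_iv A * measure unit_iv B"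
  by (simp add: U.emeasure_pair_measure_Times measure_def enn2real_mult)


abbreviation "PP \<equiv> unit_iv \<Otimes>\<^sub>M unit_iv"

definition rect :: "(real \<times> real \<Rightarrow> real) \<Rightarrow> real set \<Rightarrow> real set \<Rightarrow> real" where
  "rect V S T = (LINT z|PP. indicator (S \<times> T) z * V z)"

lemma int_ind: "A \<in> sets M \<Longrightarrow> integrable M f \<Longrightarrow> integrable M (\<lambda>x. indicator A x * (f x::real))"
  using integrable_mult_indicator[of A M f] by simp

definition UC :: "nat \<Rightarrow> nat set \<Rightarrow> real set" where
  "UC n I = (\<Union>i\<in>I. cell n i)"

lemma ind_cell_mult: "indicator (cell n i0) x * indicator (cell n i) x =
   (if i = i0 then indicator (cell n i0) x else (0::real))"
  using cell_disj[of i i0 n] by (auto simp: indicator_def)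

lemma step_eq: "step_kernel n a x y =
   (\<Sum>i<n. \<Sum>j<n. a i j * indicator (cell n i \<times> cell n j) (x,y))"
  unfolding step_kernel_def cell_def[symmetric] by (simp add: indicator_times mult.assoc)

lemma rect_sets: "i < n \<Longrightarrow> j < n \<Longrightarrow> cell n i \<times> cell n j \<in> sets PP"
  by (simp add: cell_sets)

lemma integrable_step: "integrable PP (\<lambda>(x,y). step_kernel n a x y)"
proof -
  have "integrable PP (\<lambda>z. \<Sum>i<n. \<Sum>j<n. a i j * indicator (cell n i \<times> cell n j) z)"
    apply (rule Bochner_Integration.integrable_sum, rule Bochner_Integration.integrable_sum, rule integrable_mult_right)
    by (auto simp: integrable_indicator_iff rect_sets sets.Int_space_eq2 less_top[symmetric])
  then show ?thesis unfolding step_eq case_prod_beta prod.collapse .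
qed

lemma UC_sets: "I \<subseteq> {..<n} \<Longrightarrow> UC n I \<in> sets unit_iv"
  unfolding UC_def using cell_sets
  by (intro sets.countable_UN'') (auto intro: countable_subset[of _ "{..<n}"])

lemma ind_UC: "finite I \<Longrightarrow> indicator (UC n I) x = (\<Sum>i\<in>I. indicator (cell n i) x)"
  unfolding UC_def by (rule indicator_UN_disjoint) (auto simp: cell_disjoint_family)

lemma rect_UC:
  assumes V: "integrable PP V" and I: "I \<subseteq> {..<n}" and J: "J \<subseteq> {..<n}"
  shows "rect V (UC n I) (UC n J) = (\<Sum>i\<in>I. \<Sum>j\<in>J. rect V (cell n i) (cell n j))"
proof -
  have fI: "finite I" "finite J" using I J finite_subset by blast+
  have "\<And>z. indicator (UC n I \<times> UC n J) z * V z =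
      (\<Sum>i\<in>I. \<Sum>j\<in>J. indicator (cell n i \<times> cell n j) z * V z)"
  proof -
    fix z :: "real \<times> real"
    obtain x y where z: "z = (x,y)" by fastforce
    show "?thesis z"
      unfolding z indicator_times ind_UC[OF fI(1)] ind_UC[OF fI(2)] sum_distrib_right
      apply (rule sum.cong[OF refl])
      by (simp only: sum_distrib_left sum_distrib_right mult.assoc)
  qed
  then have "rect V (UC n I) (UC n J) =
      (LINT z|PP. (\<Sum>i\<in>I. \<Sum>j\<in>J. indicator (cell n i \<times> cell n j) z * V z))"
    unfolding rect_def by presburger
  also have "\<dots> = (\<Sum>i\<in>I. \<Sum>j\<in>J. rect V (cell n i) (cell n j))"
  proof -
    have int: "integrable PP (\<lambda>z. indicator (cell n i \<times> cell n j) z * V z)" if "i \<in> I" "j \<in> J" for i j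
      using that I J by (intro int_ind rect_sets V) auto
    show ?thesis unfolding rect_def
      apply (subst Bochner_Integration.integral_sum)
       apply (rule Bochner_Integration.integrable_sum, erule (1) int)
      apply (rule sum.cong[OF refl])
      apply (subst Bochner_Integration.integral_sum)
       apply (erule (1) int)
      apply (simp add: rect_def)
      done
  qed
  finally show ?thesis .
qed

lemma rect_step:
  assumes "i0 < n" "j0 < n"
  shows "rect (\<lambda>(x,y). step_kernel n a x y) (cell n i0) (cell n j0) = a i0 j0 / (real n)^2"
proof -
  have "\<And>z. indicator (cell n i0 \<times> cell n j0) z * (\<lambda>(x,y). step_kernel n a x y) z
        = a i0 j0 * indicator (cell n i0 \<times> cell n j0) z"
  proof -
    fix z :: "real \<times> real"
    obtain x y where z: "z = (x,y)" by fastforce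
    have "indicator (cell n i0 \<times> cell n j0) z * (\<lambda>(x,y). step_kernel n a x y) z
       = (\<Sum>i<n. \<Sum>j<n. a i j * ((indicator (cell n i0) x * indicator (cell n i) x) *
             (indicator (cell n j0) y * indicator (cell n j) y)))"
      by (simp add: z step_eq indicator_times sum_distrib_left mult_ac)
    also have "\<dots> = (\<Sum>i<n. if i = i0 then (\<Sum>j<n. if j = j0 then a i0 j0 *
          (indicator (cell n i0) x * indicator (cell n j0) y) else 0) else 0)"
      unfolding ind_cell_mult
    proof (rule sum.cong[OF refl])
      fix i assume "i \<in> {..<n}"
      show "(\<Sum>j<n. a i j * ((if i = i0 then indicator (cell n i0) x else 0) *
            (if j = j0 then indicator (cell n j0) y else 0))) =
         (if i = i0 then (\<Sum>j<n. if j = j0 then a i0 j0 *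
          (indicator (cell n i0) x * indicator (cell n j0) y) else 0) else 0)"
      proof (cases "i = i0")
        case True
        have "(\<Sum>j<n. a i j * ((if i = i0 then indicator (cell n i0) x else 0) *
            (if j = j0 then indicator (cell n j0) y else 0))) = (\<Sum>j<n. if j = j0 then a i0 j0 *
          (indicator (cell n i0) x * indicator (cell n j0) y) else 0)"
          using True by (intro sum.cong refl) auto
        then show ?thesis using True by simp
      qed simp
    qed
    also have "\<dots> = a i0 j0 * indicator (cell n i0 \<times> cell n j0) z"
      by (simp only: sum.delta finite_lessThan lessThan_iff assms if_True) (simp add: z indicator_times)
    finally show "?thesis z" .
  qed
  then have "rect (\<lambda>(x,y). step_kernel n a x y) (cell n i0) (cell n j0)
     = (LINT z|PP. a i0 j0 * indicator (cell n i0 \<times> cell n j0) z)"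
    unfolding rect_def by presburger
  also have "\<dots> = a i0 j0 * measure PP (cell n i0 \<times> cell n j0)"
    using rect_sets[OF assms] by (simp add: sets.Int_space_eq2)
  also have "\<dots> = a i0 j0 / (real n)^2"
    using assms by (simp add: times_measure cell_sets cell_measure power2_eq_square)
  finally show ?thesis .
qed


lemma mp_bij_meas: "mp_bij t \<Longrightarrow> t \<in> unit_iv \<rightarrow>\<^sub>M unit_iv"
  by (simp add: mp_bij_def)

lemma mp_bij_distr: assumes "mp_bij t" shows "distr unit_iv unit_iv t = unit_iv"
proof (rule measure_eqI)
  show "sets (distr unit_iv unit_iv t) = sets unit_iv" by simp
  fix A assume "A \<in> sets (distr unit_iv unit_iv t)"
  then have A: "A \<in> sets unit_iv" by simp
  show "emeasure (distr unit_iv unit_iv t) A = emeasure unit_iv A"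
    using assms A by (simp add: emeasure_distr mp_bij_def)
qed

lemma mp_bij_distr2: assumes "mp_bij t"
  shows "distr PP PP (\<lambda>(x,y). (t x, t y)) = PP"
proof -
  have "distr unit_iv unit_iv t \<Otimes>\<^sub>M distr unit_iv unit_iv t = distr PP PP (\<lambda>(x,y). (t x, t y))"
    by (rule pair_measure_distr) (auto simp: mp_bij_meas[OF assms] mp_bij_distr[OF assms]
        U.sigma_finite_measure_axioms)
  then show ?thesis by (simp add: mp_bij_distr[OF assms])
qed

lemma map_meas: "mp_bij t \<Longrightarrow> (\<lambda>(x,y). (t x, t y)) \<in> PP \<rightarrow>\<^sub>M PP"
  using mp_bij_meas[of t] by (simp add: case_prod_beta measurable_pair_iff)

lemma kernel_meas: "is_kernel k \<Longrightarrow> (\<lambda>(x,y). k x y) \<in> borel_measurable PP"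
  by (simp add: is_kernel_def)

lemma integrable_Vt: assumes "is_kernel k" "mp_bij t"
  shows "integrable PP (\<lambda>(x,y). k (t x) (t y))"
proof -
  have "integrable (distr PP PP (\<lambda>(x,y). (t x, t y))) (\<lambda>(x,y). k x y)"
    using assms by (simp add: mp_bij_distr2 is_kernel_def)
  then have "integrable PP (\<lambda>z. (\<lambda>(x,y). k x y) ((\<lambda>(x,y). (t x, t y)) z))"
    by (subst integrable_distr_eq[symmetric]) (auto simp: map_meas[OF assms(2)] kernel_meas[OF assms(1)])
  then show ?thesis by (simp add: split_beta')
qed

lemma tail_Vt: assumes "is_kernel k" "mp_bij t"
  shows "(LINT z|PP. max ((\<lambda>(x,y). k (t x) (t y)) z - L) 0) = (LINT z|PP. max ((\<lambda>(x,y). k x y) z - L) 0)"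
proof -
  have "(LINT z|PP. max ((\<lambda>(x,y). k x y) z - L) 0) =
      (LINT z|distr PP PP (\<lambda>(x,y). (t x, t y)). max ((\<lambda>(x,y). k x y) z - L) 0)"
    by (simp add: mp_bij_distr2[OF assms(2)])
  also have "\<dots> = (LINT z|PP. max ((\<lambda>(x,y). k x y) ((\<lambda>(x,y). (t x, t y)) z) - L) 0)"
    using kernel_meas[OF assms(1)] by (intro integral_distr map_meas assms) auto
  finally show ?thesis by (simp add: case_prod_beta)
qed

lemma tail_small: assumes "is_kernel k" "e > 0"
  shows "\<exists>L\<ge>0. (LINT z|PP. max ((\<lambda>(x,y). k x y) z - L) 0) \<le> e"
proof -
  let ?f = "\<lambda>(x,y). k x y"
  have int: "integrable PP ?f" using assms by (simp add: is_kernel_def)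
  have "(\<lambda>m::nat. LINT z|PP. max (?f z - real m) 0) \<longlonglongrightarrow> (LINT z|PP. (0::real))"
  proof (rule integral_dominated_convergence[where w="\<lambda>z. \<bar>?f z\<bar>"])
    show "(\<lambda>z. 0::real) \<in> borel_measurable PP" by simp
    show "\<And>m. (\<lambda>z. max (?f z - real m) 0) \<in> borel_measurable PP"
      using kernel_meas[OF assms(1)] by measurable
    show "integrable PP (\<lambda>z. \<bar>?f z\<bar>)" using int by simp
    show "AE z in PP. (\<lambda>m. max (?f z - real m) 0) \<longlonglongrightarrow> 0"
    proof (rule AE_I2)
      fix z
      obtain N :: nat where "?f z < real N" using reals_Archimedean2 by blast
      then have "\<forall>m\<ge>N. max (?f z - real m) 0 = 0"
        by (auto simp: max_def)
      then show "(\<lambda>m. max (?f z - real m) 0) \<longlonglongrightarrow> 0"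
        by (intro tendsto_eventually eventually_sequentiallyI[of N]) auto
    qed
    show "\<And>m. AE z in PP. norm (max (?f z - real m) 0) \<le> \<bar>?f z\<bar>"
      by (intro AE_I2) auto
  qed
  then have "(\<lambda>m::nat. LINT z|PP. max (?f z - real m) 0) \<longlonglongrightarrow> 0" by simp
  then obtain N where "\<forall>m\<ge>N. \<bar>LINT z|PP. max (?f z - real m) 0\<bar> < e"
    using assms(2) LIMSEQ_D[of _ 0 e] by fastforce
  then show ?thesis by (intro exI[of _ "real N"]) auto
qed


lemma Vt_nonneg: assumes "is_kernel k" "mp_bij t" "z \<in> space PP"
  shows "0 \<le> (\<lambda>(x,y). k (t x) (t y)) z"
proof -
  obtain x y where z: "z = (x,y)" by fastforce
  have "x \<in> space unit_iv" "y \<in> space unit_iv" using assms(3) by (auto simp: z space_pair_measure)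
  then have "t x \<in> {0..1}" "t y \<in> {0..1}" using mp_bij_meas[OF assms(2)]
    by (metis measurable_space unit_iv_space)+
  then show ?thesis using assms(1) by (simp add: z is_kernel_def)
qed

lemma cellpair_disj: "disjoint_family_on (\<lambda>p. cell n (fst p) \<times> cell n (snd p)) Ps"
  unfolding disjoint_family_on_def
proof (intro ballI impI)
  fix p q :: "nat \<times> nat" assume "p \<noteq> q"
  then have "fst p \<noteq> fst q \<or> snd p \<noteq> snd q" by (auto simp: prod_eq_iff)
  then show "(cell n (fst p) \<times> cell n (snd p)) \<inter> (cell n (fst q) \<times> cell n (snd q)) = {}"
    using cell_disj by blast
qed

lemma pairs_bound:
  assumes k: "is_kernel k" and t: "mp_bij t" and Ps: "Ps \<subseteq> {..<n} \<times> {..<n}"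
  shows "(\<Sum>p\<in>Ps. rect (\<lambda>(x,y). k (t x) (t y)) (cell n (fst p)) (cell n (snd p)))
     \<le> L * real (card Ps) / (real n)^2 + (LINT z|PP. max ((\<lambda>(x,y). k x y) z - L) 0)"
proof -
  let ?V = "\<lambda>(x,y). k (t x) (t y)"
  let ?C = "\<lambda>p. cell n (fst p) \<times> cell n (snd p)"
  let ?h = "\<lambda>z. \<Sum>p\<in>Ps. indicator (?C p) z :: real"
  have fin: "finite Ps" using Ps finite_subset by blast
  have Cs: "p \<in> Ps \<Longrightarrow> ?C p \<in> sets PP" for p using Ps by (auto intro!: rect_sets)
  have intV: "integrable PP ?V" by (rule integrable_Vt[OF k t])
  have h01: "0 \<le> ?h z \<and> ?h z \<le> 1" for z
  proof -
    have "?h z = indicator (\<Union>(?C ` Ps)) z"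
      by (rule indicator_UN_disjoint[symmetric, OF fin cellpair_disj])
    then show ?thesis by (simp add: indicator_def)
  qed
  have inth: "integrable PP ?h"
    by (rule Bochner_Integration.integrable_sum) (auto simp: integrable_indicator_iff Cs sets.Int_space_eq2 less_top[symmetric])
  have "(\<Sum>p\<in>Ps. rect ?V (cell n (fst p)) (cell n (snd p))) = (LINT z|PP. ?h z * ?V z)"
    unfolding rect_def sum_distrib_right
    by (rule Bochner_Integration.integral_sum[symmetric]) (intro int_ind Cs intV)
  also have "\<dots> \<le> (LINT z|PP. L * ?h z + max (?V z - L) 0)"
  proof (rule integral_mono)
    show "integrable PP (\<lambda>z. ?h z * ?V z)"
      unfolding sum_distrib_right by (rule Bochner_Integration.integrable_sum) (intro int_ind Cs intV)
    show "integrable PP (\<lambda>z. L * ?h z + max (?V z - L) 0)"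
      using inth intV by auto
    fix z assume z: "z \<in> space PP"
    have v: "0 \<le> ?V z" by (rule Vt_nonneg[OF k t z])
    show "?h z * ?V z \<le> L * ?h z + max (?V z - L) 0"
    proof (cases "?V z \<le> L")
      case True
      have "?h z * ?V z \<le> ?h z * L" using h01[of z] True by (intro mult_left_mono) auto
      then show ?thesis by (simp add: mult.commute)
    next
      case False
      have "?h z * ?V z = ?h z * L + ?h z * (?V z - L)" by (simp add: algebra_simps)
      also have "\<dots> \<le> ?h z * L + 1 * (?V z - L)"
        using h01[of z] False by (intro add_left_mono mult_right_mono) auto
      finally show ?thesis using False by (simp add: mult.commute)
    qed
  qed
  also have "\<dots> = L * (LINT z|PP. ?h z) + (LINT z|PP. max (?V z - L) 0)"
    using inth intV by simp
  also have "(LINT z|PP. ?h z) = real (card Ps) / (real n)^2"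
  proof -
    have "(LINT z|PP. ?h z) = (\<Sum>p\<in>Ps. measure PP (?C p))"
      by (subst Bochner_Integration.integral_sum) (auto simp: integrable_indicator_iff Cs sets.Int_space_eq2 less_top[symmetric])
    also have "\<dots> = (\<Sum>p\<in>Ps. 1 / (real n)^2)"
      using Ps by (intro sum.cong refl) (auto simp: times_measure cell_sets cell_measure power2_eq_square)
    finally show ?thesis by simp
  qed
  also have "(LINT z|PP. max (?V z - L) 0) = (LINT z|PP. max ((\<lambda>(x,y). k x y) z - L) 0)"
    by (rule tail_Vt[OF k t])
  finally show ?thesis by simp
qed


lemma sign_choice:
  fixes c :: "'a \<Rightarrow> 'a \<Rightarrow> real"
  assumes "finite R"
  shows "\<exists>x. (\<forall>i. x i = 1 \<or> x i = -1) \<and> (\<Sum>i\<in>R. c i i) \<le> (\<Sum>i\<in>R. \<Sum>l\<in>R. x i * x l * c i l)"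
  using assms
proof (induction R rule: finite_induct)
  case empty
  then show ?case by (intro exI[of _ "\<lambda>_. 1"]) auto
next
  case (insert r R)
  then obtain x where x: "\<forall>i. x i = 1 \<or> x i = -1"
    "(\<Sum>i\<in>R. c i i) \<le> (\<Sum>i\<in>R. \<Sum>l\<in>R. x i * x l * c i l)" by blast
  define B where "B = (\<Sum>l\<in>R. x l * (c r l + c l r))"
  define s :: real where "s = (if B \<ge> 0 then 1 else -1)"
  define x' where "x' = x(r := s)"
  have x'R: "\<forall>i\<in>R. x' i = x i" using insert(2) by (auto simp: x'_def)
  have sB: "0 \<le> s * B" by (simp add: s_def)
  have ss: "s * s = 1" by (simp add: s_def)
  have "(\<Sum>i\<in>insert r R. \<Sum>l\<in>insert r R. x' i * x' l * c i l)
      = (\<Sum>i\<in>R. \<Sum>l\<in>R. x i * x l * c i l) + s * B + c r r"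
  proof -
    have "(\<Sum>i\<in>insert r R. \<Sum>l\<in>insert r R. x' i * x' l * c i l) =
       (s * s * c r r + (\<Sum>l\<in>R. s * x l * c r l)) +
       (\<Sum>i\<in>R. x i * s * c i r + (\<Sum>l\<in>R. x i * x l * c i l))"
      using insert(1,2) x'R by (simp add: x'_def sum.insert cong: sum.cong)
    also have "\<dots> = (\<Sum>i\<in>R. \<Sum>l\<in>R. x i * x l * c i l) + s * B + c r r"
      by (simp add: B_def ss sum.distrib sum_distrib_left algebra_simps)
    finally show ?thesis .
  qed
  moreover have "(\<Sum>i\<in>insert r R. c i i) = c r r + (\<Sum>i\<in>R. c i i)"
    using insert by simp
  ultimately have "(\<Sum>i\<in>insert r R. c i i) \<le> (\<Sum>i\<in>insert r R. \<Sum>l\<in>insert r R. x' i * x' l * c i l)"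
    using x(2) sB by linarith
  moreover have "\<forall>i. x' i = 1 \<or> x' i = -1" using x by (auto simp: x'_def s_def)
  ultimately show ?case by blast
qed

lemma split_pm:
  fixes f :: "'a \<Rightarrow> real"
  assumes "finite R"
  shows "(\<Sum>i\<in>R. f i) = (\<Sum>i\<in>{i\<in>R. x i = 1}. f i) + (\<Sum>i\<in>{i\<in>R. x i \<noteq> 1}. f i)"
proof -
  have "R = {i\<in>R. x i = 1} \<union> {i\<in>R. x i \<noteq> 1}" by auto
  then have "(\<Sum>i\<in>R. f i) = (\<Sum>i\<in>{i\<in>R. x i = 1} \<union> {i\<in>R. x i \<noteq> 1}. f i)" by simp
  also have "\<dots> = (\<Sum>i\<in>{i\<in>R. x i = 1}. f i) + (\<Sum>i\<in>{i\<in>R. x i \<noteq> 1}. f i)"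
    using assms by (intro sum.union_disjoint) auto
  finally show ?thesis .
qed

lemma four_terms:
  fixes c :: "'a \<Rightarrow> 'a \<Rightarrow> real"
  assumes "finite R" "\<forall>i. x i = 1 \<or> x i = -1"
  defines "Rp \<equiv> {i\<in>R. x i = 1}" and "Rm \<equiv> {i\<in>R. x i \<noteq> 1}"
  shows "(\<Sum>i\<in>R. \<Sum>l\<in>R. x i * x l * c i l) =
     (\<Sum>i\<in>Rp. \<Sum>l\<in>Rp. c i l) + (\<Sum>i\<in>Rm. \<Sum>l\<in>Rm. c i l)
     - (\<Sum>i\<in>Rp. \<Sum>l\<in>Rm. c i l) - (\<Sum>i\<in>Rm. \<Sum>l\<in>Rp. c i l)"
proof -
  have xm: "i \<in> Rm \<Longrightarrow> x i = -1" for i using assms(2) by (auto simp: Rm_def)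
  have xp: "i \<in> Rp \<Longrightarrow> x i = 1" for i by (auto simp: Rp_def)
  have fin: "finite Rp" "finite Rm" using assms(1) by (auto simp: Rp_def Rm_def)
  have "(\<Sum>i\<in>R. \<Sum>l\<in>R. x i * x l * c i l) =
      (\<Sum>i\<in>Rp. \<Sum>l\<in>Rp. x i * x l * c i l) + (\<Sum>i\<in>Rp. \<Sum>l\<in>Rm. x i * x l * c i l)
      + ((\<Sum>i\<in>Rm. \<Sum>l\<in>Rp. x i * x l * c i l) + (\<Sum>i\<in>Rm. \<Sum>l\<in>Rm. x i * x l * c i l))"
  proof -
    have inner: "(\<Sum>l\<in>R. x i * x l * c i l) = (\<Sum>l\<in>Rp. x i * x l * c i l) + (\<Sum>l\<in>Rm. x i * x l * c i l)" for i
      unfolding Rp_def Rm_def by (rule split_pm[OF assms(1)])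
    have outer: "(\<Sum>i\<in>R. \<Sum>l\<in>R. x i * x l * c i l) = (\<Sum>i\<in>Rp. \<Sum>l\<in>R. x i * x l * c i l) + (\<Sum>i\<in>Rm. \<Sum>l\<in>R. x i * x l * c i l)"
      unfolding Rp_def Rm_def by (rule split_pm[OF assms(1)])
    show ?thesis by (subst outer, simp only: inner sum.distrib add.assoc)
  qed
  also have "\<dots> = (\<Sum>i\<in>Rp. \<Sum>l\<in>Rp. c i l) + (\<Sum>i\<in>Rm. \<Sum>l\<in>Rm. c i l)
     - (\<Sum>i\<in>Rp. \<Sum>l\<in>Rm. c i l) - (\<Sum>i\<in>Rm. \<Sum>l\<in>Rp. c i l)"
    by (simp add: xp xm sum_negf)
  finally show ?thesis .
qed


context
  fixes k :: "real \<Rightarrow> real \<Rightarrow> real" and t :: "real \<Rightarrow> real" and n :: nat and a :: "nat \<Rightarrow> nat \<Rightarrow> real"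
  assumes k: "is_kernel k" and t: "mp_bij t"
begin

definition "W = (\<lambda>(x,y). step_kernel n a x y - k (t x) (t y))"
definition "Vt = (\<lambda>(x,y). k (t x) (t y))"
definition "St = (\<lambda>(x,y). step_kernel n a x y)"

lemma W_alt: "W = (\<lambda>z. St z - Vt z)"
  by (auto simp: W_def St_def Vt_def fun_eq_iff)

lemma int_Vt: "integrable PP Vt" unfolding Vt_def by (rule integrable_Vt[OF k t])
lemma int_St: "integrable PP St" unfolding St_def by (rule integrable_step)
lemma int_W: "integrable PP W" unfolding W_alt using int_Vt int_St by simp

lemma cut_bound: assumes "S \<in> sets unit_iv" "T \<in> sets unit_iv"
  shows "\<bar>rect W S T\<bar> \<le> cut_norm W"
  unfolding cut_norm_def
proof (rule cSup_upper)
  show "\<bar>rect W S T\<bar> \<in> {\<bar>LINT z|PP. indicator (S \<times> T) z * W z\<bar> | S T. S \<in> sets unit_iv \<and> T \<in> sets unit_iv}"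
    using assms unfolding rect_def by blast
  show "bdd_above {\<bar>LINT z|PP. indicator (S \<times> T) z * W z\<bar> | S T. S \<in> sets unit_iv \<and> T \<in> sets unit_iv}"
  proof (rule bdd_aboveI, safe)
    fix S T :: "real set" assume ST: "S \<in> sets unit_iv" "T \<in> sets unit_iv"
    show "\<bar>LINT z|PP. indicator (S \<times> T) z * W z\<bar> \<le> (LINT z|PP. \<bar>W z\<bar>)"
      using ST by (intro integral_abs_bound_integral int_ind int_W)
         (auto simp: indicator_def int_W)
  qed
qed

lemma rect_W: "i < n \<Longrightarrow> j < n \<Longrightarrow>
    rect W (cell n i) (cell n j) = a i j / (real n)^2 - rect Vt (cell n i) (cell n j)"
proof -
  assume ij: "i < n" "j < n"
  have "rect W (cell n i) (cell n j) = rect St (cell n i) (cell n j) - rect Vt (cell n i) (cell n j)"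
    unfolding rect_def W_alt right_diff_distrib
    by (rule Bochner_Integration.integral_diff) (auto intro!: int_ind rect_sets ij int_St int_Vt)
  then show ?thesis using rect_step[OF ij, of a] by (simp add: St_def)
qed

lemma strip_bound:
  assumes I: "I \<subseteq> {..<n}"
  shows "(\<Sum>i\<in>I. \<Sum>j<n. a i j) / (real n)^2 \<le> cut_norm W
          + L * real (card I * n) / (real n)^2 + (LINT z|PP. max ((\<lambda>(x,y). k x y) z - L) 0)"
proof -
  have "rect W (UC n I) (UC n {..<n}) = (\<Sum>i\<in>I. \<Sum>j<n. rect W (cell n i) (cell n j))"
    by (rule rect_UC[OF int_W I]) auto
  also have "\<dots> = (\<Sum>i\<in>I. \<Sum>j<n. a i j / (real n)^2) - (\<Sum>i\<in>I. \<Sum>j<n. rect Vt (cell n i) (cell n j))"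
    using I by (simp add: rect_W subset_eq sum_subtractf)
  also have "(\<Sum>i\<in>I. \<Sum>j<n. rect Vt (cell n i) (cell n j)) =
      (\<Sum>p\<in>I \<times> {..<n}. rect Vt (cell n (fst p)) (cell n (snd p)))"
    by (simp add: sum.cartesian_product case_prod_beta)
  finally have eq: "rect W (UC n I) (UC n {..<n}) = (\<Sum>i\<in>I. \<Sum>j<n. a i j) / (real n)^2 -
      (\<Sum>p\<in>I \<times> {..<n}. rect Vt (cell n (fst p)) (cell n (snd p)))"
    by (simp add: sum_divide_distrib)
  have "(\<Sum>p\<in>I \<times> {..<n}. rect Vt (cell n (fst p)) (cell n (snd p))) \<le>
      L * real (card (I \<times> {..<n})) / (real n)^2 + (LINT z|PP. max ((\<lambda>(x,y). k x y) z - L) 0)"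
    unfolding Vt_def using I by (intro pairs_bound k t) auto
  moreover have "card (I \<times> {..<n}) = card I * n" by (simp add: card_cartesian_product)
  moreover have "rect W (UC n I) (UC n {..<n}) \<le> cut_norm W"
    using cut_bound[of "UC n I" "UC n {..<n}"] UC_sets[OF I] UC_sets[of "{..<n}" n] by auto
  ultimately show ?thesis using eq by simp
qed

lemma rect_UC_reindex:
  assumes A: "A \<subseteq> {..<n}" and B: "B \<subseteq> R" and R: "g ` R \<subseteq> {..<n}" and inj: "inj_on g R"
  shows "rect W (UC n A) (UC n (g ` B)) = (\<Sum>i\<in>A. \<Sum>l\<in>B. rect W (cell n i) (cell n (g l)))"
proof -
  have "rect W (UC n A) (UC n (g ` B)) = (\<Sum>i\<in>A. \<Sum>j\<in>g ` B. rect W (cell n i) (cell n j))"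
    using B R by (intro rect_UC[OF int_W A]) auto
  also have "\<dots> = (\<Sum>i\<in>A. \<Sum>l\<in>B. rect W (cell n i) (cell n (g l)))"
    using inj_on_subset[OF inj B] by (simp add: sum.reindex)
  finally show ?thesis .
qed

lemma matching_bound:
  assumes R: "R \<subseteq> {..<n}" and gR: "g ` R \<subseteq> {..<n}" and inj: "inj_on g R"
  shows "(\<Sum>i\<in>R. a i (g i)) / (real n)^2 \<le> 4 * cut_norm W
          + L * real (card R) / (real n)^2 + (LINT z|PP. max ((\<lambda>(x,y). k x y) z - L) 0)"
proof -
  define c where "c i l = rect W (cell n i) (cell n (g l))" for i l
  have fin: "finite R" using R finite_subset by blast
  obtain x where x: "\<forall>i. x i = 1 \<or> x i = -1" "(\<Sum>i\<in>R. c i i) \<le> (\<Sum>i\<in>R. \<Sum>l\<in>R. x i * x l * c i l)"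
    using sign_choice[OF fin, of c] by blast
  define Rp where "Rp = {i\<in>R. x i = 1}"
  define Rm where "Rm = {i\<in>R. x i \<noteq> 1}"
  have subs: "Rp \<subseteq> R" "Rm \<subseteq> R" by (auto simp: Rp_def Rm_def)
  have bnd: "\<bar>\<Sum>i\<in>A. \<Sum>l\<in>B. c i l\<bar> \<le> cut_norm W" if "A \<subseteq> R" "B \<subseteq> R" for A B
  proof -
    have "(\<Sum>i\<in>A. \<Sum>l\<in>B. c i l) = rect W (UC n A) (UC n (g ` B))"
      unfolding c_def using that R by (intro rect_UC_reindex[symmetric, OF _ _ gR inj]) auto
    also have "\<bar>\<dots>\<bar> \<le> cut_norm W"
      using that R gR by (intro cut_bound UC_sets) (auto simp: subset_eq)
    finally show ?thesis .
  qed
  have "(\<Sum>i\<in>R. \<Sum>l\<in>R. x i * x l * c i l) \<le> 4 * cut_norm W"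
    unfolding four_terms[OF fin x(1)] Rp_def[symmetric] Rm_def[symmetric]
    using bnd[OF subs(1) subs(1)] bnd[OF subs(2) subs(2)] bnd[OF subs(1) subs(2)] bnd[OF subs(2) subs(1)]
    by linarith
  moreover have "(\<Sum>i\<in>R. c i i) = (\<Sum>i\<in>R. a i (g i)) / (real n)^2 - (\<Sum>i\<in>R. rect Vt (cell n i) (cell n (g i)))"
    unfolding c_def using R gR by (simp add: rect_W subset_eq sum_subtractf sum_divide_distrib)
  moreover have "(\<Sum>i\<in>R. rect Vt (cell n i) (cell n (g i))) \<le>
      L * real (card R) / (real n)^2 + (LINT z|PP. max ((\<lambda>(x,y). k x y) z - L) 0)"
  proof -
    have inj2: "inj_on (\<lambda>i. (i, g i)) R" by (auto simp: inj_on_def)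
    have "(\<Sum>i\<in>R. rect Vt (cell n i) (cell n (g i))) =
        (\<Sum>p\<in>(\<lambda>i. (i, g i)) ` R. rect Vt (cell n (fst p)) (cell n (snd p)))"
      by (simp add: sum.reindex[OF inj2])
    also have "\<dots> \<le> L * real (card ((\<lambda>i. (i, g i)) ` R)) / (real n)^2 + (LINT z|PP. max ((\<lambda>(x,y). k x y) z - L) 0)"
      unfolding Vt_def using R gR by (intro pairs_bound k t) auto
    finally show ?thesis by (simp add: card_image[OF inj2])
  qed
  ultimately show ?thesis using x(2) by linarith
qed

end


definition Eset :: "(nat \<Rightarrow> nat \<Rightarrow> real) \<Rightarrow> nat \<Rightarrow> real \<Rightarrow> (nat \<times> nat) set" where
  "Eset a n th = {(i,j). i < n \<and> j < n \<and> a i j > th * real n}"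
definition Rows where "Rows a n th = fst ` Eset a n th"
definition gsel where "gsel a n th i = (SOME j. (i,j) \<in> Eset a n th)"
definition Cols where "Cols a n th = gsel a n th ` Rows a n th"
definition hsel where "hsel a n th j = (SOME i. i \<in> Rows a n th \<and> gsel a n th i = j)"

lemma Eset_sub: "Eset a n th \<subseteq> {..<n} \<times> {..<n}" by (auto simp: Eset_def)
lemma finite_Eset: "finite (Eset a n th)" using Eset_sub[of a n th] finite_subset by blast
lemma Rows_sub: "Rows a n th \<subseteq> {..<n}"
proof
  fix i assume "i \<in> Rows a n th"
  then obtain p where "p \<in> Eset a n th" "i = fst p" unfolding Rows_def by blast
  then show "i \<in> {..<n}" unfolding Eset_def by auto
qed
lemma gsel: assumes "i \<in> Rows a n th" shows "(i, gsel a n th i) \<in> Eset a n th"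
proof -
  obtain p where p: "p \<in> Eset a n th" "i = fst p" using assms unfolding Rows_def by blast
  then have "(i, snd p) \<in> Eset a n th" by simp
  then show ?thesis unfolding gsel_def by (rule someI)
qed
lemma Cols_sub: "Cols a n th \<subseteq> {..<n}"
proof
  fix j assume "j \<in> Cols a n th"
  then obtain i where "i \<in> Rows a n th" "j = gsel a n th i" unfolding Cols_def by blast
  then have "(i, j) \<in> Eset a n th" using gsel by blast
  then show "j \<in> {..<n}" unfolding Eset_def by auto
qed
lemma hsel: assumes "j \<in> Cols a n th" shows "hsel a n th j \<in> Rows a n th \<and> gsel a n th (hsel a n th j) = j"
proof -
  obtain i where "i \<in> Rows a n th \<and> gsel a n th i = j" using assms unfolding Cols_def by blast
  then show ?thesis unfolding hsel_def by (rule someI)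
qed

lemma stage1:
  fixes a :: "nat \<Rightarrow> nat \<Rightarrow> real"
  assumes n: "n > 0" and M: "\<And>R g. R \<subseteq> {..<n} \<Longrightarrow> g ` R \<subseteq> {..<n} \<Longrightarrow> inj_on g R \<Longrightarrow>
          (\<Sum>i\<in>R. a i (g i)) / (real n)^2 \<le> d + L * real (card R) / (real n)^2 + T"
    and L: "L \<ge> 0"
  shows "th * real (card (Cols a n th)) / real n \<le> d + L / real n + T"
proof -
  let ?g = "gsel a n th" and ?h = "hsel a n th" and ?C = "Cols a n th"
  define R0 where "R0 = ?h ` ?C"
  have R0: "R0 \<subseteq> Rows a n th" using hsel[of _ a n th] unfolding R0_def by blast
  have inj: "inj_on ?g R0"
  proof (rule inj_onI)
    fix x y assume "x \<in> R0" "y \<in> R0" and eq: "?g x = ?g y"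
    then obtain j1 j2 where j: "j1 \<in> ?C" "j2 \<in> ?C" "x = ?h j1" "y = ?h j2" unfolding R0_def by blast
    then have "?g x = j1" "?g y = j2" using hsel[of _ a n th] by blast+
    then show "x = y" using eq j by simp
  qed
  have gR0: "?g ` R0 = ?C"
  proof
    show "?g ` R0 \<subseteq> ?C" unfolding R0_def using hsel[of _ a n th] by (simp add: image_subset_iff)
    show "?C \<subseteq> ?g ` R0"
    proof
      fix j assume "j \<in> ?C"
      then have "?g (?h j) = j" "?h j \<in> R0" using hsel[of _ a n th] unfolding R0_def by auto
      then show "j \<in> ?g ` R0" by (metis imageI)
    qed
  qed
  have R0n: "R0 \<subseteq> {..<n}" using R0 Rows_sub[of a n th] by blast
  have fin: "finite R0" using R0n finite_subset by blast
  have cardR0: "card R0 = card ?C" using card_image[OF inj] gR0 by simp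
  have cardC: "card ?C \<le> n" using card_mono[OF finite_lessThan Cols_sub[of a n th]] by simp
  have big: "i \<in> R0 \<Longrightarrow> th * real n < a i (?g i)" for i
    using gsel[of i a n th] R0 by (auto simp: Eset_def)
  have "real (card R0) * (th * real n) \<le> (\<Sum>i\<in>R0. a i (?g i))"
  proof -
    have "(\<Sum>i\<in>R0. th * real n) \<le> (\<Sum>i\<in>R0. a i (?g i))"
      using big by (intro sum_mono) (simp add: less_imp_le)
    then show ?thesis by simp
  qed
  then have "real (card R0) * (th * real n) / (real n)^2 \<le> (\<Sum>i\<in>R0. a i (?g i)) / (real n)^2"
    by (intro divide_right_mono) auto
  also have "\<dots> \<le> d + L * real (card R0) / (real n)^2 + T"
    using M[OF R0n _ inj] gR0 Cols_sub[of a n th] by simp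
  finally have f1: "real (card ?C) * (th * real n) / (real n)^2 \<le> d + L * real (card ?C) / (real n)^2 + T"
    by (simp only: cardR0)
  have f2: "real (card ?C) * (th * real n) / (real n)^2 = th * real (card ?C) / real n"
    using n by (simp add: power2_eq_square field_simps)
  have f3: "L * real (card ?C) / (real n)^2 \<le> L / real n"
  proof -
    have "L * real (card ?C) \<le> L * real n" using cardC L by (intro mult_left_mono) auto
    then have "L * real (card ?C) / (real n)^2 \<le> L * real n / (real n)^2"
      by (intro divide_right_mono) auto
    also have "\<dots> = L / real n" using n by (simp add: power2_eq_square)
    finally show ?thesis .
  qed
  have "th * real (card ?C) / real n \<le> d + L * real (card ?C) / (real n)^2 + T"
    using f1 unfolding f2 .
  also have "\<dots> \<le> d + L / real n + T" using f3 by (rule add_right_mono[OF add_left_mono])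
  finally show ?thesis .
qed

lemma stage2:
  fixes a :: "nat \<Rightarrow> nat \<Rightarrow> real"
  assumes n: "n > 0"
    and a: "\<And>i j. i < n \<Longrightarrow> j < n \<Longrightarrow> 0 \<le> a i j \<and> a i j = a j i"
    and S: "\<And>I. I \<subseteq> {..<n} \<Longrightarrow> (\<Sum>i\<in>I. \<Sum>j<n. a i j) / (real n)^2 \<le> d + L * real (card I * n) / (real n)^2 + T"
  shows "th * real (card (Rows a n th)) / real n \<le> d + L * real (card (Cols a n th)) / real n + T"
proof -
  let ?g = "gsel a n th" and ?C = "Cols a n th" and ?R = "Rows a n th"
  have finR: "finite ?R" using Rows_sub[of a n th] finite_subset by blast
  have gE: "i \<in> ?R \<Longrightarrow> i < n \<and> ?g i < n \<and> th * real n < a i (?g i)" for i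
    using gsel[of i a n th] by (auto simp: Eset_def)
  have "(\<Sum>i\<in>?R. th * real n) \<le> (\<Sum>i\<in>?R. a i (?g i))"
    using gE by (intro sum_mono) (simp add: less_imp_le)
  also have "\<dots> = (\<Sum>i\<in>?R. a (?g i) i)"
    using gE a by (intro sum.cong refl) auto
  also have "\<dots> = (\<Sum>j\<in>?C. \<Sum>i\<in>{i\<in>?R. ?g i = j}. a j i)"
    unfolding Cols_def by (subst sum.image_gen[OF finR]) (auto intro!: sum.cong)
  also have "\<dots> \<le> (\<Sum>j\<in>?C. \<Sum>i<n. a j i)"
  proof (rule sum_mono)
    fix j assume j: "j \<in> ?C"
    then have jn: "j < n" using Cols_sub[of a n th] by blast
    show "(\<Sum>i\<in>{i\<in>?R. ?g i = j}. a j i) \<le> (\<Sum>i<n. a j i)"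
      using Rows_sub[of a n th] jn a by (intro sum_mono2) auto
  qed
  finally have "real (card ?R) * (th * real n) / (real n)^2 \<le> (\<Sum>j\<in>?C. \<Sum>i<n. a j i) / (real n)^2"
    by (intro divide_right_mono) auto
  also have "\<dots> \<le> d + L * real (card ?C * n) / (real n)^2 + T" by (rule S[OF Cols_sub[of a n th]])
  finally show ?thesis using n by (simp add: power2_eq_square field_simps)
qed

lemma stage3:
  fixes a :: "nat \<Rightarrow> nat \<Rightarrow> real"
  assumes n: "n > 0"
    and a: "\<And>i j. i < n \<Longrightarrow> j < n \<Longrightarrow> 0 \<le> a i j \<and> a i j = a j i"
    and S: "\<And>I. I \<subseteq> {..<n} \<Longrightarrow> (\<Sum>i\<in>I. \<Sum>j<n. a i j) / (real n)^2 \<le> d + L * real (card I * n) / (real n)^2 + T"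
  shows "(\<Sum>(i,j)\<in>Eset a n th. a i j) / (real n)^2 \<le> d + L * real (card (Rows a n th)) / real n + T"
proof -
  let ?R = "Rows a n th"
  have finR: "finite ?R" using Rows_sub[of a n th] finite_subset by blast
  have "(\<Sum>(i,j)\<in>Eset a n th. a i j) \<le> (\<Sum>(i,j)\<in>?R \<times> {..<n}. a i j)"
  proof (rule sum_mono2)
    show "finite (?R \<times> {..<n})" using finR by simp
    show "Eset a n th \<subseteq> ?R \<times> {..<n}" by (force simp: Rows_def Eset_def)
    show "\<And>b. b \<in> ?R \<times> {..<n} - Eset a n th \<Longrightarrow> 0 \<le> (case b of (i, j) \<Rightarrow> a i j)"
      using Rows_sub[of a n th] a by auto
  qed
  also have "\<dots> = (\<Sum>i\<in>?R. \<Sum>j<n. a i j)" by (simp add: sum.cartesian_product)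
  finally have "(\<Sum>(i,j)\<in>Eset a n th. a i j) / (real n)^2 \<le> (\<Sum>i\<in>?R. \<Sum>j<n. a i j) / (real n)^2"
    by (intro divide_right_mono) auto
  also have "\<dots> \<le> d + L * real (card ?R * n) / (real n)^2 + T" by (rule S[OF Rows_sub[of a n th]])
  finally show ?thesis using n by (simp add: power2_eq_square)
qed


lemma lim0:
  fixes x y1 y2 :: "nat \<Rightarrow> real" and T :: "real \<Rightarrow> real"
  assumes Tsmall: "\<And>e. e > 0 \<Longrightarrow> \<exists>L\<ge>0. T L \<le> e"
    and y1: "y1 \<longlonglongrightarrow> 0" and y2: "y2 \<longlonglongrightarrow> 0"
    and x0: "\<And>n. n > 0 \<Longrightarrow> 0 \<le> x n"
    and bnd: "\<And>n L. n > 0 \<Longrightarrow> L \<ge> 0 \<Longrightarrow> x n \<le> y1 n + L * y2 n + T L"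
  shows "x \<longlonglongrightarrow> 0"
proof (rule LIMSEQ_I)
  fix e :: real assume e: "e > 0"
  obtain L where L: "L \<ge> 0" "T L \<le> e / 3" using Tsmall[of "e/3"] e by auto
  have "(\<lambda>n. L * y2 n) \<longlonglongrightarrow> 0" using tendsto_mult_right_zero[OF y2] by simp
  then have ev2: "eventually (\<lambda>n. L * y2 n < e / 3) sequentially"
    using e order_tendstoD(2)[of "\<lambda>n. L * y2 n" 0 sequentially "e/3"] by simp
  have ev1: "eventually (\<lambda>n. y1 n < e / 3) sequentially"
    using e y1 order_tendstoD(2)[of y1 0 sequentially "e/3"] by simp
  have ev3: "eventually (\<lambda>n. n > 0) sequentially" by (rule eventually_gt_at_top)
  from eventually_conj[OF ev1 eventually_conj[OF ev2 ev3]]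
  obtain N where N: "\<And>n. n \<ge> N \<Longrightarrow> y1 n < e / 3 \<and> L * y2 n < e / 3 \<and> n > 0"
    by (auto simp: eventually_sequentially)
  show "\<exists>N. \<forall>n\<ge>N. norm (x n - 0) < e"
  proof (intro exI allI impI)
    fix n assume "n \<ge> N"
    with N have *: "y1 n < e / 3" "L * y2 n < e / 3" "n > 0" by auto
    have "x n \<le> y1 n + L * y2 n + T L" by (rule bnd[OF *(3) L(1)])
    then show "norm (x n - 0) < e" using * L x0[OF *(3)] by simp
  qed
qed

lemma diagonal:
  fixes s :: "real \<Rightarrow> nat \<Rightarrow> real"
  assumes s: "\<And>th. th > 0 \<Longrightarrow> s th \<longlonglongrightarrow> 0"
  shows "\<exists>th :: nat \<Rightarrow> real. (\<forall>n. th n > 0) \<and> th \<longlonglongrightarrow> 0 \<and> (\<lambda>n. s (th n) n / th n) \<longlonglongrightarrow> 0"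
proof -
  define f where "f k n = s (1 / (real k + 1)) n * (real k + 1)" for k n
  have f: "f k \<longlonglongrightarrow> 0" for k
    unfolding f_def using tendsto_mult_left_zero[OF s[of "1 / (real k + 1)"]] by simp
  have "\<exists>N. \<forall>m\<ge>N. \<bar>f k m\<bar> \<le> 1 / (real k + 1)" for k
  proof -
    have "1 / (real k + 1) > 0" by simp
    from LIMSEQ_D[OF f[of k] this] obtain no where "\<forall>n\<ge>no. norm (f k n - 0) < 1 / (real k + 1)" by blast
    then show ?thesis by (auto intro: less_imp_le)
  qed
  then obtain N where N: "\<And>k m. m \<ge> N k \<Longrightarrow> \<bar>f k m\<bar> \<le> 1 / (real k + 1)" by metis
  define K where "K n = Max ({0} \<union> {k. k \<le> n \<and> (\<forall>j\<le>k. N j \<le> n)})" for n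
  have finK: "finite ({0} \<union> {k. k \<le> n \<and> (\<forall>j\<le>k. N j \<le> n)})" for n by auto
  have Kge: "K n \<ge> k0" if "n \<ge> k0" "\<forall>j\<le>k0. N j \<le> n" for n k0
    unfolding K_def using that finK by (intro Max_ge) auto
  have Kprop: "N (K n) \<le> n" if "n \<ge> N 0" for n
  proof -
    have "K n \<in> {0} \<union> {k. k \<le> n \<and> (\<forall>j\<le>k. N j \<le> n)}"
      unfolding K_def by (rule Max_in[OF finK]) auto
    then show ?thesis using that by auto
  qed
  have Ktop: "filterlim K at_top sequentially"
  proof (subst filterlim_at_top, intro allI)
    fix k0 :: nat
    define n0 where "n0 = max k0 (Max (N ` {..k0}))"
    have "\<forall>n\<ge>n0. k0 \<le> K n"
    proof (intro allI impI)
      fix n assume "n \<ge> n0"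
      moreover have "\<forall>j\<le>k0. N j \<le> n0" unfolding n0_def
        by (auto intro!: max.coboundedI2 Max_ge)
      ultimately show "k0 \<le> K n" by (intro Kge) (auto simp: n0_def)
    qed
    then show "eventually (\<lambda>n. k0 \<le> K n) sequentially" by (auto simp: eventually_sequentially)
  qed
  have inv: "(\<lambda>n. 1 / (real (K n) + 1)) \<longlonglongrightarrow> 0"
  proof -
    have "filterlim (\<lambda>n. real (K n)) at_top sequentially"
      by (rule filterlim_compose[OF filterlim_real_sequentially Ktop])
    from filterlim_tendsto_add_at_top[OF tendsto_const this, of 1]
    have "filterlim (\<lambda>n. real (K n) + 1) at_top sequentially" by (simp add: add.commute)
    then show ?thesis by (simp add: tendsto_divide_0[OF tendsto_const] filterlim_at_top_imp_at_infinity)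
  qed
  define th where "th n = 1 / (real (K n) + 1)" for n
  have "(\<lambda>n. s (th n) n / th n) \<longlonglongrightarrow> 0"
  proof (rule tendsto_sandwich[of "\<lambda>n. - (1 / (real (K n) + 1))" _ _ "\<lambda>n. 1 / (real (K n) + 1)"])
    have "eventually (\<lambda>n. n \<ge> N 0) sequentially" by (rule eventually_ge_at_top)
    then have ev: "eventually (\<lambda>n. \<bar>s (th n) n / th n\<bar> \<le> 1 / (real (K n) + 1)) sequentially"
    proof (rule eventually_mono)
      fix n assume "n \<ge> N 0"
      then have "\<bar>f (K n) n\<bar> \<le> 1 / (real (K n) + 1)" using N Kprop by blast
      moreover have "s (th n) n / th n = f (K n) n" by (simp add: th_def f_def)
      ultimately show "\<bar>s (th n) n / th n\<bar> \<le> 1 / (real (K n) + 1)" by simp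
    qed
    show "eventually (\<lambda>n. - (1 / (real (K n) + 1)) \<le> s (th n) n / th n) sequentially"
      using ev by (rule eventually_mono) linarith
    show "eventually (\<lambda>n. s (th n) n / th n \<le> 1 / (real (K n) + 1)) sequentially"
      using ev by (rule eventually_mono) linarith
    show "(\<lambda>n. - (1 / (real (K n) + 1))) \<longlonglongrightarrow> 0" using tendsto_minus[OF inv] by simp
    show "(\<lambda>n. 1 / (real (K n) + 1)) \<longlonglongrightarrow> 0" by (rule inv)
  qed
  moreover have "th \<longlonglongrightarrow> 0" using inv by (simp add: th_def[abs_def])
  moreover have "\<forall>n. th n > 0" by (simp add: th_def)
  ultimately show ?thesis by blast
qed


lemma mp_bij_id: "mp_bij id"
proof -
  have "\<forall>B\<in>sets unit_iv. emeasure unit_iv (id -` B \<inter> space unit_iv) = emeasure unit_iv B"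
    by (auto simp: sets_unit_iv Int_absorb2)
  then show ?thesis unfolding mp_bij_def by auto
qed

lemma cut_norm_nonneg: assumes "is_kernel k" "mp_bij t" shows "0 \<le> cut_norm (W k t n a)"
  using cut_bound[OF assms, of "{}" "{}" n a] by simp

theorem mainTheorem10:
  fixes k :: "real \<Rightarrow> real \<Rightarrow> real" and A :: "nat \<Rightarrow> nat \<Rightarrow> nat \<Rightarrow> real"
  assumes "is_kernel k"
    and "\<And>n i j. i < n \<Longrightarrow> j < n \<Longrightarrow> 0 \<le> A n i j \<and> A n i j = A n j i"
    and "(\<lambda>n. cut_dist (step_kernel n (A n)) k) \<longlonglongrightarrow> 0"
  shows "\<exists>M :: nat \<Rightarrow> real. M \<in> o(\<lambda>n. real n) \<and>
           (\<lambda>n. real (card {(i,j). i < n \<and> j < n \<and> A n i j > M n})) \<in> o(\<lambda>n. real n) \<and>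
           (\<lambda>n. \<Sum>(i,j)\<in>{(i,j). i < n \<and> j < n \<and> A n i j > M n}. A n i j) \<in> o(\<lambda>n. (real n)^2)"
proof -
  note k = assms(1) and Asym = assms(2) and lim = assms(3)
  have "\<exists>t. mp_bij t \<and> cut_norm (\<lambda>(x,y). step_kernel n (A n) x y - k (t x) (t y))
      < cut_dist (step_kernel n (A n)) k + 1 / (real n + 1)" for n
  proof -
    let ?X = "{cut_norm (\<lambda>(x,y). step_kernel n (A n) x y - k (t x) (t y)) | t. mp_bij t}"
    have ne: "?X \<noteq> {}" using mp_bij_id by blast
    have lt: "Inf ?X < cut_dist (step_kernel n (A n)) k + 1 / (real n + 1)"
    proof -
      have "0 < 1 / (real n + 1)" by simp
      then show ?thesis unfolding cut_dist_def by (rule less_add_same_cancel1[THEN iffD2])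
    qed
    from cInf_lessD[OF ne lt] obtain x where x: "x \<in> ?X" "x < cut_dist (step_kernel n (A n)) k + 1 / (real n + 1)"
      by (elim bexE conjE)
    from x(1) have "\<exists>t. x = cut_norm (\<lambda>(x,y). step_kernel n (A n) x y - k (t x) (t y)) \<and> mp_bij t"
      by (simp only: mem_Collect_eq)
    then obtain t where "mp_bij t" "x = cut_norm (\<lambda>(x,y). step_kernel n (A n) x y - k (t x) (t y))"
      by (elim exE conjE)
    then show ?thesis using x(2) by (intro exI[of _ t]) simp
  qed
  then have "\<forall>n. \<exists>t. mp_bij t \<and> cut_norm (\<lambda>(x,y). step_kernel n (A n) x y - k (t x) (t y))
      < cut_dist (step_kernel n (A n)) k + 1 / (real n + 1)" by blast
  from choice[OF this] obtain t where t0: "\<forall>n. mp_bij (t n) \<and> cut_norm (\<lambda>(x,y). step_kernel n (A n) x y - k (t n x) (t n y))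
      < cut_dist (step_kernel n (A n)) k + 1 / (real n + 1)" by blast
  have t: "\<And>n. mp_bij (t n)"
    "\<And>n. cut_norm (\<lambda>(x,y). step_kernel n (A n) x y - k (t n x) (t n y))
      < cut_dist (step_kernel n (A n)) k + 1 / (real n + 1)" using t0 by blast+
  define dd where "dd n = cut_norm (W k (t n) n (A n))" for n
  have dd_le: "dd n \<le> cut_dist (step_kernel n (A n)) k + 1 / (real n + 1)" for n
    using t(2)[of n] W_def[OF k t(1)[of n], of n "A n"] by (simp add: dd_def)
  have dd0: "0 \<le> dd n" for n unfolding dd_def by (rule cut_norm_nonneg[OF k t(1)])
  have dd: "dd \<longlonglongrightarrow> 0"
  proof (rule tendsto_sandwich[of "\<lambda>_. 0" _ _ "\<lambda>n. cut_dist (step_kernel n (A n)) k + 1 / (real n + 1)"])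
    show "eventually (\<lambda>n. 0 \<le> dd n) sequentially" using dd0 by simp
    show "eventually (\<lambda>n. dd n \<le> cut_dist (step_kernel n (A n)) k + 1 / (real n + 1)) sequentially"
      using dd_le by simp
    show "(\<lambda>n. 0::real) \<longlonglongrightarrow> 0" by simp
    have "(\<lambda>n. 1 / (real n + 1)) \<longlonglongrightarrow> 0" using LIMSEQ_inverse_real_of_nat by (simp add: inverse_eq_divide add.commute)
    from tendsto_add[OF lim this]
    show "(\<lambda>n. cut_dist (step_kernel n (A n)) k + 1 / (real n + 1)) \<longlonglongrightarrow> 0" by simp
  qed
  define T where "T L = (LINT z|PP. max ((\<lambda>(x,y). k x y) z - L) 0)" for L
  have Tsmall: "\<And>e. e > 0 \<Longrightarrow> \<exists>L\<ge>0. T L \<le> e" unfolding T_def by (rule tail_small[OF k])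
  have invn: "(\<lambda>n. 1 / real n) \<longlonglongrightarrow> 0" by (rule lim_1_over_n)
  define s where "s th n = (\<Sum>(i,j)\<in>Eset (A n) n th. A n i j) / (real n)^2" for th n
  have s0: "th > 0 \<Longrightarrow> s th \<longlonglongrightarrow> 0" for th
  proof -
    assume th: "th > 0"
    have Sh: "\<And>I. I \<subseteq> {..<n} \<Longrightarrow> (\<Sum>i\<in>I. \<Sum>j<n. A n i j) / (real n)^2 \<le> dd n + L * real (card I * n) / (real n)^2 + T L" for n L
      unfolding dd_def T_def by (rule strip_bound[OF k t(1)])
    have Mh: "\<And>R g. R \<subseteq> {..<n} \<Longrightarrow> g ` R \<subseteq> {..<n} \<Longrightarrow> inj_on g R \<Longrightarrow>
          (\<Sum>i\<in>R. A n i (g i)) / (real n)^2 \<le> 4 * dd n + L * real (card R) / (real n)^2 + T L" for n L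
      unfolding dd_def T_def by (rule matching_bound[OF k t(1)])
    define xG where "xG n = th * real (card (Cols (A n) n th)) / real n" for n
    define xR where "xR n = th * real (card (Rows (A n) n th)) / real n" for n
    have xG: "xG \<longlonglongrightarrow> 0"
    proof (rule lim0[OF Tsmall, of "\<lambda>n. 4 * dd n" "\<lambda>n. 1 / real n"])
      show "(\<lambda>n. 4 * dd n) \<longlonglongrightarrow> 0" using tendsto_mult_right_zero[OF dd, of 4] by simp
      show "(\<lambda>n. 1 / real n) \<longlonglongrightarrow> 0" by (rule invn)
      show "\<And>n. n > 0 \<Longrightarrow> 0 \<le> xG n" using th by (simp add: xG_def)
      show "\<And>n L. n > 0 \<Longrightarrow> L \<ge> 0 \<Longrightarrow> xG n \<le> 4 * dd n + L * (1 / real n) + T L"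
      proof -
        fix n :: nat and L :: real assume n: "n > 0" and L: "L \<ge> 0"
        have "th * real (card (Cols (A n) n th)) / real n \<le> 4 * dd n + L / real n + T L"
          by (rule stage1[where a="A n" and n=n and d="4 * dd n" and L=L and T="T L" and th=th, OF n Mh L])
        then show "xG n \<le> 4 * dd n + L * (1 / real n) + T L" by (simp add: xG_def)
      qed
    qed
    have xG': "(\<lambda>n. real (card (Cols (A n) n th)) / real n) \<longlonglongrightarrow> 0"
      using tendsto_mult_right_zero[OF xG, of "1/th"] th by (simp add: xG_def)
    have xR: "xR \<longlonglongrightarrow> 0"
    proof (rule lim0[OF Tsmall dd xG'])
      show "\<And>n. n > 0 \<Longrightarrow> 0 \<le> xR n" using th by (simp add: xR_def)
      show "\<And>n L. n > 0 \<Longrightarrow> L \<ge> 0 \<Longrightarrow> xR n \<le> dd n + L * (real (card (Cols (A n) n th)) / real n) + T L"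
      proof -
        fix n :: nat and L :: real assume n: "n > 0" and L: "L \<ge> 0"
        have "th * real (card (Rows (A n) n th)) / real n \<le> dd n + L * real (card (Cols (A n) n th)) / real n + T L"
          by (rule stage2[where a="A n" and n=n and d="dd n" and L=L and T="T L" and th=th, OF n Asym Sh])
        then show "xR n \<le> dd n + L * (real (card (Cols (A n) n th)) / real n) + T L" by (simp add: xR_def)
      qed
    qed
    have xR': "(\<lambda>n. real (card (Rows (A n) n th)) / real n) \<longlonglongrightarrow> 0"
      using tendsto_mult_right_zero[OF xR, of "1/th"] th by (simp add: xR_def)
    show "s th \<longlonglongrightarrow> 0"
    proof (rule lim0[OF Tsmall dd xR'])
      show "\<And>n. n > 0 \<Longrightarrow> 0 \<le> s th n" unfolding s_def using Asym
        by (intro divide_nonneg_pos sum_nonneg) (auto simp: Eset_def)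
      show "\<And>n L. n > 0 \<Longrightarrow> L \<ge> 0 \<Longrightarrow> s th n \<le> dd n + L * (real (card (Rows (A n) n th)) / real n) + T L"
      proof -
        fix n :: nat and L :: real assume n: "n > 0" and L: "L \<ge> 0"
        have "(\<Sum>(i,j)\<in>Eset (A n) n th. A n i j) / (real n)^2 \<le> dd n + L * real (card (Rows (A n) n th)) / real n + T L"
          by (rule stage3[where a="A n" and n=n and d="dd n" and L=L and T="T L" and th=th, OF n Asym Sh])
        then show "s th n \<le> dd n + L * (real (card (Rows (A n) n th)) / real n) + T L" by (simp add: s_def)
      qed
    qed
  qed
  obtain th where th: "\<And>n. th n > 0" "th \<longlonglongrightarrow> 0" "(\<lambda>n. s (th n) n / th n) \<longlonglongrightarrow> 0"
    using diagonal[of s, OF s0] by blast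
  define M where "M n = th n * real n" for n
  have setE: "{(i,j). i < n \<and> j < n \<and> A n i j > M n} = Eset (A n) n (th n)" for n
    by (simp add: Eset_def M_def)
  have evn: "eventually (\<lambda>n::nat. n > 0) sequentially" by (rule eventually_gt_at_top)
  have "M \<in> o(\<lambda>n. real n)"
  proof (rule smalloI_tendsto)
    show "(\<lambda>n. M n / real n) \<longlonglongrightarrow> 0"
    proof (rule Lim_transform_eventually[OF th(2)])
      show "eventually (\<lambda>n. th n = M n / real n) sequentially"
        using evn by (rule eventually_mono) (simp add: M_def)
    qed
    show "eventually (\<lambda>n. real n \<noteq> 0) sequentially" using evn by (rule eventually_mono) simp
  qed
  moreover have "(\<lambda>n. \<Sum>(i,j)\<in>{(i,j). i < n \<and> j < n \<and> A n i j > M n}. A n i j) \<in> o(\<lambda>n. (real n)^2)"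
  proof (rule smalloI_tendsto)
    have "(\<lambda>n. s (th n) n / th n * th n) \<longlonglongrightarrow> 0 * 0" by (rule tendsto_mult[OF th(3) th(2)])
    then have "(\<lambda>n. s (th n) n) \<longlonglongrightarrow> 0" using th(1) by (simp add: less_imp_neq[symmetric])
    then show "(\<lambda>n. (\<Sum>(i,j)\<in>{(i,j). i < n \<and> j < n \<and> A n i j > M n}. A n i j) / (real n)^2) \<longlonglongrightarrow> 0"
      by (simp add: setE s_def)
    show "eventually (\<lambda>n. (real n)^2 \<noteq> 0) sequentially" using evn by (rule eventually_mono) simp
  qed
  moreover have "(\<lambda>n. real (card {(i,j). i < n \<and> j < n \<and> A n i j > M n})) \<in> o(\<lambda>n. real n)"
  proof (rule smalloI_tendsto)
    show "eventually (\<lambda>n. real n \<noteq> 0) sequentially" using evn by (rule eventually_mono) simp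
    show "(\<lambda>n. real (card {(i,j). i < n \<and> j < n \<and> A n i j > M n}) / real n) \<longlonglongrightarrow> 0"
    proof (rule tendsto_sandwich[OF _ _ tendsto_const th(3)])
      show "eventually (\<lambda>n. 0 \<le> real (card {(i,j). i < n \<and> j < n \<and> A n i j > M n}) / real n) sequentially"
        by simp
      show "eventually (\<lambda>n. real (card {(i,j). i < n \<and> j < n \<and> A n i j > M n}) / real n \<le> s (th n) n / th n) sequentially"
        using evn
      proof (rule eventually_mono)
        fix n :: nat assume n: "n > 0"
        let ?E = "Eset (A n) n (th n)"
        have "(\<Sum>p\<in>?E. th n * real n) \<le> (\<Sum>(i,j)\<in>?E. A n i j)"
          by (intro sum_mono) (auto simp: Eset_def less_imp_le)
        then have "real (card ?E) * (th n * real n) \<le> (\<Sum>(i,j)\<in>?E. A n i j)" by simp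
        then have "real (card ?E) / real n \<le> (\<Sum>(i,j)\<in>?E. A n i j) / (real n)^2 / th n"
          using n th(1)[of n] by (simp add: field_simps power2_eq_square)
        then show "real (card {(i,j). i < n \<and> j < n \<and> A n i j > M n}) / real n \<le> s (th n) n / th n"
          by (simp add: setE s_def)
      qed
    qed
  qed
  ultimately show ?thesis by blast
qed


end
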